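(* Let $\rho$ be a representation of $32_{65}$ over a set $U$, and view it as an edge-coloring of the complete graph on $U$ in which the edge $\{x,y\}$ ($x\ne y$) gets the color $z\in\{a,b,c\}$ with $(x,y)\in\rho(z)$. Then for every edge $x_0x_1$ of color $a$ there is a set of four vertices, disjoint from $\{x_0,x_1\}$, all six of whose edges have color $a$. More precisely, there exist ten distinct vertices $x_0,x_1$, $w_{pq}$ for $(p,q)\in\{b,c\}^2$, $u_p$ and $v_p$ for $p\in\{b,c\}$ such that: $x_0w_{pq}$ has color $p$ and $w_{pq}x_1$ has color $q$; $x_0u_p$ has color $a$ and $u_px_1$ has color $p$; $x_0v_p$ has color $p$ and $v_px_1$ has color $a$; all edges among the four vertices $w_{pq}$ have color $a$; and every edge between a vertex $w_{pq}$ and a vertex $u_{p'}$ or $v_{p'}$ has color $a$.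
   Context: $32_{65}$ is the finite integral symmetric relation algebra with atoms $1'$, $a$, $b$, $c$, all symmetric, in which a diversity cycle $xyz$ (with $x,y,z\in\{a,b,c\}$) is mandatory (i.e. $x;y\ge z$) if it involves $a$ and forbidden (i.e. $x;y\cdot z=0$) otherwise. A representation over a set $U$ is an embedding $\rho$ into the full relation algebra $\langle\mathcal P(U\times U),\cup,{}^c,\circ,{}^{-1},\mathrm{Id}_U\rangle$. *)

theory Defs
  imports Main
begin

datatype atom = Id1 | At_a | At_b | At_c

text \<open>Atom composition table: 1' is the identity; for diversity atoms x, y the
  product x;y contains 1' iff x = y (all atoms symmetric) and contains a diversity
  atom z iff the cycle xyz is mandatory, i.e. iff a occurs among x, y, z.\<close>
definition atom_comp :: "atom \<Rightarrow> atom \<Rightarrow> atom set" where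
  "atom_comp x y =
     (if x = Id1 then {y}
      else if y = Id1 then {x}
      else {z. z \<noteq> Id1 \<and> At_a \<in> {x, y, z}} \<union> (if x = y then {Id1} else {}))"

definition ra_join :: "atom set \<Rightarrow> atom set \<Rightarrow> atom set" where
  "ra_join X Y = X \<union> Y"

definition ra_compl :: "atom set \<Rightarrow> atom set" where
  "ra_compl X = UNIV - X"

definition ra_comp :: "atom set \<Rightarrow> atom set \<Rightarrow> atom set" where
  "ra_comp X Y = (\<Union>x\<in>X. \<Union>y\<in>Y. atom_comp x y)"

definition ra_conv :: "atom set \<Rightarrow> atom set" where
  "ra_conv X = X"   \<comment> \<open>all atoms are symmetric\<close>

definition ra_one :: "atom set" where
  "ra_one = {Id1}"

definition representation :: "'u set \<Rightarrow> (atom set \<Rightarrow> ('u \<times> 'u) set) \<Rightarrow> bool" where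
  "representation U \<rho> \<longleftrightarrow>
     inj \<rho> \<and>
     (\<forall>X. \<rho> X \<subseteq> U \<times> U) \<and>
     (\<forall>X Y. \<rho> (ra_join X Y) = \<rho> X \<union> \<rho> Y) \<and>
     (\<forall>X. \<rho> (ra_compl X) = (U \<times> U) - \<rho> X) \<and>
     (\<forall>X Y. \<rho> (ra_comp X Y) = \<rho> X O \<rho> Y) \<and>
     (\<forall>X. \<rho> (ra_conv X) = (\<rho> X)\<inverse>) \<and>
     \<rho> ra_one = Id_on U"

definition has_color :: "(atom set \<Rightarrow> ('u \<times> 'u) set) \<Rightarrow> 'u \<Rightarrow> 'u \<Rightarrow> atom \<Rightarrow> bool" where
  "has_color \<rho> x y z \<longleftrightarrow> (x, y) \<in> \<rho> {z}"

end

theory Submission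
  imports Defs
begin

locale rp =
  fixes U :: "'u set" and \<rho> :: "atom set \<Rightarrow> ('u \<times> 'u) set"
  assumes rep: "representation U \<rho>"
begin

lemma sub: "\<rho> X \<subseteq> U \<times> U" using rep unfolding representation_def by (elim conjE) (rule spec)
lemma join: "\<rho> (X \<union> Y) = \<rho> X \<union> \<rho> Y" using rep unfolding representation_def ra_join_def by (elim conjE) simp
lemma compl: "\<rho> (UNIV - X) = U \<times> U - \<rho> X" using rep unfolding representation_def ra_compl_def by (elim conjE) simp
lemma comp: "\<rho> (ra_comp X Y) = \<rho> X O \<rho> Y" using rep unfolding representation_def by (elim conjE) simp
lemma conv: "\<rho> X = (\<rho> X)\<inverse>" using rep unfolding representation_def ra_conv_def by (elim conjE) simp
lemma one: "\<rho> {Id1} = Id_on U" using rep unfolding representation_def ra_one_def by (elim conjE) simp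

lemma mono: "X \<subseteq> Y \<Longrightarrow> \<rho> X \<subseteq> \<rho> Y"
  by (metis join sup.absorb_iff2 sup_ge1)

lemma meet: "\<rho> (X \<inter> Y) = \<rho> X \<inter> \<rho> Y"
proof -
  have "X \<inter> Y = UNIV - ((UNIV - X) \<union> (UNIV - Y))" by blast
  hence "\<rho> (X \<inter> Y) = U \<times> U - ((U \<times> U - \<rho> X) \<union> (U \<times> U - \<rho> Y))"
    by (simp add: compl join)
  thus ?thesis using sub[of X] sub[of Y] by blast
qed

lemma empty: "\<rho> {} = {}"
proof -
  have "({Id1} \<inter> (UNIV - {Id1})) = {}" by simp
  hence "\<rho> {} = \<rho> {Id1} \<inter> \<rho> (UNIV - {Id1})" by (metis meet)
  also have "\<dots> = Id_on U \<inter> (U \<times> U - Id_on U)" by (simp add: compl one)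
  also have "\<dots> = {}" by blast
  finally show ?thesis .
qed

lemma univ: "\<rho> UNIV = U \<times> U"
  using compl[of "{}"] empty by simp

lemma uniq: "(x,y) \<in> \<rho> {z} \<Longrightarrow> (x,y) \<in> \<rho> {z'} \<Longrightarrow> z = z'"
  using meet[of "{z}" "{z'}"] empty by (cases "z = z'") auto

lemma total: "x \<in> U \<Longrightarrow> y \<in> U \<Longrightarrow> \<exists>z. (x,y) \<in> \<rho> {z}"
proof -
  assume "x \<in> U" "y \<in> U"
  have "UNIV = {Id1} \<union> {At_a} \<union> {At_b} \<union> {At_c}" by (auto intro: atom.exhaust)
  hence "\<rho> UNIV = \<rho> {Id1} \<union> \<rho> {At_a} \<union> \<rho> {At_b} \<union> \<rho> {At_c}" by (metis join)
  thus ?thesis using univ \<open>x \<in> U\<close> \<open>y \<in> U\<close> by blast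
qed

definition f where "f x y = (THE z. (x,y) \<in> \<rho> {z})"

lemma f_eq: "(x,y) \<in> \<rho> {z} \<Longrightarrow> f x y = z"
  unfolding f_def using uniq by blast

lemma f_col: "x \<in> U \<Longrightarrow> y \<in> U \<Longrightarrow> (x,y) \<in> \<rho> {f x y}"
  using total f_eq by metis

lemma inU: "(x,y) \<in> \<rho> {z} \<Longrightarrow> x \<in> U \<and> y \<in> U" using sub by blast

lemma sy: "(x,y) \<in> \<rho> {z} \<Longrightarrow> (y,x) \<in> \<rho> {z}"
  by (subst conv) simp

lemma f_sym: "(x,y) \<in> \<rho> {z} \<Longrightarrow> f y x = z"
  using sy f_eq by blast

lemma f_diag: "x \<in> U \<Longrightarrow> f x x = Id1"
  using one f_eq by (metis Id_onI)

lemma compat: "ra_comp {x} {y} = atom_comp x y" unfolding ra_comp_def by simp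

lemma mand: "(x,y) \<in> \<rho> {z} \<Longrightarrow> z \<in> atom_comp p q \<Longrightarrow> \<exists>w. (x,w) \<in> \<rho> {p} \<and> (w,y) \<in> \<rho> {q}"
proof -
  assume h: "(x,y) \<in> \<rho> {z}" "z \<in> atom_comp p q"
  have "\<rho> {z} \<subseteq> \<rho> (atom_comp p q)" using h(2) by (intro mono) simp
  hence "(x,y) \<in> \<rho> {p} O \<rho> {q}" using h(1) comp[of "{p}" "{q}"] compat[of p q] by auto
  thus ?thesis by blast
qed

lemma ac_sub: "p \<in> {At_b, At_c} \<Longrightarrow> q \<in> {At_b, At_c} \<Longrightarrow> atom_comp p q \<subseteq> {Id1} \<union> {At_a}"
  unfolding atom_comp_def by auto

lemma forb: "(w,x) \<in> \<rho> {p} \<Longrightarrow> (x,w') \<in> \<rho> {q} \<Longrightarrow> p \<in> {At_b, At_c} \<Longrightarrow> q \<in> {At_b, At_c}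
   \<Longrightarrow> w \<noteq> w' \<Longrightarrow> (w,w') \<in> \<rho> {At_a}"
proof -
  assume h: "(w,x) \<in> \<rho> {p}" "(x,w') \<in> \<rho> {q}" "p \<in> {At_b, At_c}" "q \<in> {At_b, At_c}" "w \<noteq> w'"
  have "(w,w') \<in> \<rho> {p} O \<rho> {q}" using h(1,2) by (rule relcompI)
  hence "(w,w') \<in> \<rho> (atom_comp p q)" using comp[of "{p}" "{q}"] compat[of p q] by simp
  moreover have "\<rho> (atom_comp p q) \<subseteq> \<rho> ({Id1} \<union> {At_a})" using ac_sub[OF h(3,4)] by (rule mono)
  ultimately have "(w,w') \<in> \<rho> {Id1} \<union> \<rho> {At_a}" using join[of "{Id1}" "{At_a}"] by blast
  thus ?thesis using one h(5) by auto
qed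

end

lemma ac: "At_a \<in> atom_comp p q" "At_a \<in> atom_comp At_a q" "At_a \<in> atom_comp p At_a"
  if "p \<in> {At_b, At_c}" "q \<in> {At_b, At_c}" for p q
  using that unfolding atom_comp_def by auto

theorem mainTheorem6:
  fixes U :: "'u set" and \<rho> :: "atom set \<Rightarrow> ('u \<times> 'u) set" and x0 x1 :: 'u
  assumes rep: "representation U \<rho>"
    and edge: "has_color \<rho> x0 x1 At_a"
  shows "\<exists>(w :: atom \<Rightarrow> atom \<Rightarrow> 'u) (u :: atom \<Rightarrow> 'u) (v :: atom \<Rightarrow> 'u).
     distinct [x0, x1, w At_b At_b, w At_b At_c, w At_c At_b, w At_c At_c,
               u At_b, u At_c, v At_b, v At_c] \<and>
     (\<forall>p\<in>{At_b, At_c}. \<forall>q\<in>{At_b, At_c}.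
        has_color \<rho> x0 (w p q) p \<and> has_color \<rho> (w p q) x1 q) \<and>
     (\<forall>p\<in>{At_b, At_c}.
        has_color \<rho> x0 (u p) At_a \<and> has_color \<rho> (u p) x1 p \<and>
        has_color \<rho> x0 (v p) p \<and> has_color \<rho> (v p) x1 At_a) \<and>
     (\<forall>p\<in>{At_b, At_c}. \<forall>q\<in>{At_b, At_c}. \<forall>p'\<in>{At_b, At_c}. \<forall>q'\<in>{At_b, At_c}.
        (p, q) \<noteq> (p', q') \<longrightarrow> has_color \<rho> (w p q) (w p' q') At_a) \<and>
     (\<forall>p\<in>{At_b, At_c}. \<forall>q\<in>{At_b, At_c}. \<forall>p'\<in>{At_b, At_c}.
        has_color \<rho> (w p q) (u p') At_a \<and> has_color \<rho> (w p q) (v p') At_a)"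
proof -
  interpret rp U \<rho> using rep by (simp add: rp_def)
  have e: "(x0,x1) \<in> \<rho> {At_a}" using edge unfolding has_color_def .
  have W: "\<exists>w. (x0,w) \<in> \<rho> {p} \<and> (w,x1) \<in> \<rho> {q}" if "p \<in> {At_b, At_c}" "q \<in> {At_b, At_c}" for p q
    using mand[OF e ac(1)[OF that]] .
  have Uu: "\<exists>w. (x0,w) \<in> \<rho> {At_a} \<and> (w,x1) \<in> \<rho> {q}" if "q \<in> {At_b, At_c}" for q
    using mand[OF e ac(2)[OF that that]] .
  have Vv: "\<exists>w. (x0,w) \<in> \<rho> {p} \<and> (w,x1) \<in> \<rho> {At_a}" if "p \<in> {At_b, At_c}" for p
    using mand[OF e ac(3)[OF that that]] .
  obtain wbb where wbb: "(x0,wbb) \<in> \<rho> {At_b}" "(wbb,x1) \<in> \<rho> {At_b}" using W by blast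
  obtain wbc where wbc: "(x0,wbc) \<in> \<rho> {At_b}" "(wbc,x1) \<in> \<rho> {At_c}" using W by blast
  obtain wcb where wcb: "(x0,wcb) \<in> \<rho> {At_c}" "(wcb,x1) \<in> \<rho> {At_b}" using W by blast
  obtain wcc where wcc: "(x0,wcc) \<in> \<rho> {At_c}" "(wcc,x1) \<in> \<rho> {At_c}" using W by blast
  obtain ub where ub: "(x0,ub) \<in> \<rho> {At_a}" "(ub,x1) \<in> \<rho> {At_b}" using Uu by blast
  obtain uc where uc: "(x0,uc) \<in> \<rho> {At_a}" "(uc,x1) \<in> \<rho> {At_c}" using Uu by blast
  obtain vb where vb: "(x0,vb) \<in> \<rho> {At_b}" "(vb,x1) \<in> \<rho> {At_a}" using Vv by blast
  obtain vc where vc: "(x0,vc) \<in> \<rho> {At_c}" "(vc,x1) \<in> \<rho> {At_a}" using Vv by blast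
  note cols = e wbb wbc wcb wcc ub uc vb vc
  have fs: "f x0 x1 = At_a"
    "f x0 wbb = At_b" "f wbb x1 = At_b"
    "f x0 wbc = At_b" "f wbc x1 = At_c"
    "f x0 wcb = At_c" "f wcb x1 = At_b"
    "f x0 wcc = At_c" "f wcc x1 = At_c"
    "f x0 ub = At_a" "f ub x1 = At_b"
    "f x0 uc = At_a" "f uc x1 = At_c"
    "f x0 vb = At_b" "f vb x1 = At_a"
    "f x0 vc = At_c" "f vc x1 = At_a"
    by (rule f_eq, rule cols)+
  have inU: "x0 \<in> U" "x1 \<in> U" using e inU by auto
  define g where "g x = (f x0 x, f x x1)" for x
  have "distinct (map g [x0, x1, wbb, wbc, wcb, wcc, ub, uc, vb, vc])"
    unfolding g_def using fs f_diag[OF inU(1)] f_diag[OF inU(2)] by simp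
  hence dist: "distinct [x0, x1, wbb, wbc, wcb, wcc, ub, uc, vb, vc]"
    using distinct_map by blast
  define w where "w = (\<lambda>p q. if p = At_b then (if q = At_b then wbb else wbc)
                              else (if q = At_b then wcb else wcc))"
  define u where "u = (\<lambda>p. if p = At_b then ub else uc)"
  define v where "v = (\<lambda>p. if p = At_b then vb else vc)"
  have A: "(x,y) \<in> \<rho> {At_a}" if "(x0,x) \<in> \<rho> {p}" "(x0,y) \<in> \<rho> {q}" "p \<in> {At_b, At_c}" "q \<in> {At_b, At_c}" "x \<noteq> y" for x y p q
    using forb[OF sy[OF that(1)] that(2-5)] .
  have B: "(x,y) \<in> \<rho> {At_a}" if "(x,x1) \<in> \<rho> {p}" "(y,x1) \<in> \<rho> {q}" "p \<in> {At_b, At_c}" "q \<in> {At_b, At_c}" "x \<noteq> y" for x y p q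
    using forb[OF that(1) sy[OF that(2)] that(3-5)] .
  have "(wbb,wbc) \<in> \<rho> {At_a}" by (rule A[OF wbb(1) wbc(1)]) (use dist in auto)
  moreover
  have "(wbb,wcb) \<in> \<rho> {At_a}" by (rule A[OF wbb(1) wcb(1)]) (use dist in auto)
  moreover
  have "(wbb,wcc) \<in> \<rho> {At_a}" by (rule A[OF wbb(1) wcc(1)]) (use dist in auto)
  moreover
  have "(wbc,wbb) \<in> \<rho> {At_a}" by (rule A[OF wbc(1) wbb(1)]) (use dist in auto)
  moreover
  have "(wbc,wcb) \<in> \<rho> {At_a}" by (rule A[OF wbc(1) wcb(1)]) (use dist in auto)
  moreover
  have "(wbc,wcc) \<in> \<rho> {At_a}" by (rule A[OF wbc(1) wcc(1)]) (use dist in auto)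
  moreover
  have "(wcb,wbb) \<in> \<rho> {At_a}" by (rule A[OF wcb(1) wbb(1)]) (use dist in auto)
  moreover
  have "(wcb,wbc) \<in> \<rho> {At_a}" by (rule A[OF wcb(1) wbc(1)]) (use dist in auto)
  moreover
  have "(wcb,wcc) \<in> \<rho> {At_a}" by (rule A[OF wcb(1) wcc(1)]) (use dist in auto)
  moreover
  have "(wcc,wbb) \<in> \<rho> {At_a}" by (rule A[OF wcc(1) wbb(1)]) (use dist in auto)
  moreover
  have "(wcc,wbc) \<in> \<rho> {At_a}" by (rule A[OF wcc(1) wbc(1)]) (use dist in auto)
  moreover
  have "(wcc,wcb) \<in> \<rho> {At_a}" by (rule A[OF wcc(1) wcb(1)]) (use dist in auto)
  moreover
  have "(wbb,ub) \<in> \<rho> {At_a}" by (rule B[OF wbb(2) ub(2)]) (use dist in auto)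
  moreover
  have "(wbb,uc) \<in> \<rho> {At_a}" by (rule B[OF wbb(2) uc(2)]) (use dist in auto)
  moreover
  have "(wbb,vb) \<in> \<rho> {At_a}" by (rule A[OF wbb(1) vb(1)]) (use dist in auto)
  moreover
  have "(wbb,vc) \<in> \<rho> {At_a}" by (rule A[OF wbb(1) vc(1)]) (use dist in auto)
  moreover
  have "(wbc,ub) \<in> \<rho> {At_a}" by (rule B[OF wbc(2) ub(2)]) (use dist in auto)
  moreover
  have "(wbc,uc) \<in> \<rho> {At_a}" by (rule B[OF wbc(2) uc(2)]) (use dist in auto)
  moreover
  have "(wbc,vb) \<in> \<rho> {At_a}" by (rule A[OF wbc(1) vb(1)]) (use dist in auto)
  moreover
  have "(wbc,vc) \<in> \<rho> {At_a}" by (rule A[OF wbc(1) vc(1)]) (use dist in auto)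
  moreover
  have "(wcb,ub) \<in> \<rho> {At_a}" by (rule B[OF wcb(2) ub(2)]) (use dist in auto)
  moreover
  have "(wcb,uc) \<in> \<rho> {At_a}" by (rule B[OF wcb(2) uc(2)]) (use dist in auto)
  moreover
  have "(wcb,vb) \<in> \<rho> {At_a}" by (rule A[OF wcb(1) vb(1)]) (use dist in auto)
  moreover
  have "(wcb,vc) \<in> \<rho> {At_a}" by (rule A[OF wcb(1) vc(1)]) (use dist in auto)
  moreover
  have "(wcc,ub) \<in> \<rho> {At_a}" by (rule B[OF wcc(2) ub(2)]) (use dist in auto)
  moreover
  have "(wcc,uc) \<in> \<rho> {At_a}" by (rule B[OF wcc(2) uc(2)]) (use dist in auto)
  moreover
  have "(wcc,vb) \<in> \<rho> {At_a}" by (rule A[OF wcc(1) vb(1)]) (use dist in auto)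
  moreover
  have "(wcc,vc) \<in> \<rho> {At_a}" by (rule A[OF wcc(1) vc(1)]) (use dist in auto)
  ultimately show ?thesis
    using dist cols
    apply -
    apply (rule exI[of _ w], rule exI[of _ u], rule exI[of _ v])
    apply (simp add: has_color_def w_def u_def v_def)
    done
qed

end
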